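(* In the stochastic epidemic model described in the context, let $u(k)=K\,I(k)$ for all $k\ge0$ with a constant gain $0\le K\le (1-d_{\max})/v_{\max}$. Then for $k=1,2,\dots,\lfloor S_0/(\delta_{\max}I_0)\rfloor$, $$\mathbb{E}[S(k)]=\begin{cases} S_0-\dfrac{\overline{\delta}\,I_0\left(1-(1+\overline{\delta}-\overline{d_I}-K\overline{v})^k\right)}{K\overline{v}-\overline{\delta}+\overline{d_I}}, & K\overline{v}>\overline{\delta}-\overline{d_I},\\[2mm] S_0-I_0\,\overline{\delta}\,k, & K\overline{v}=\overline{\delta}-\overline{d_I}.\end{cases}$$
   Context: Time is indexed by days $k=0,1,2,\dots$. Let $(\delta(k))_{k\ge0}$, $(d_I(k))_{k\ge0}$, $(v(k))_{k\ge0}$ be three mutually independent sequences of random variables, each sequence i.i.d. in $k$, with $0\le \delta(k)\le \delta_{\max}$ (where $\delta_{\max}>0$), $0\le d_I(k)\le d_{\max}$ where $d_{\max}<1$, and $0<v_{\min}\le v(k)\le v_{\max}\le 1$. Write $\overline{\delta}=\mathbb{E}[\delta(k)]$, $\overline{d_I}=\mathbb{E}[d_I(k)]$, $\overline{v}=\mathbb{E}[v(k)]$. Given a control sequence $u(k)$, the cases evolve by $S(k+1)=S(k)-\delta(k)I(k)$, $I(k+1)=(1+\delta(k))I(k)-v(k)u(k)-d_I(k)I(k)$, $R(k+1)=R(k)+v(k)u(k)$, $D(k+1)=D(k)+d_I(k)I(k)$, with $S(0)=S_0$, $I(0)=I_0>0$, $R(0)=D(0)=0$, $I_0\delta_{\max}<S_0$.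 $\lfloor z\rfloor=\max\{n\in\mathbb{Z}:n\le z\}$. *)

theory Defs
  imports "HOL-Probability.Probability"
begin

text \<open>The arguments de, dI, v are the realised
  sequences delta(k), d_I(k), v(k); the control is given in feedback form u k (state at day k);
  x0 = (S0, I0, R0, D0).\<close>
fun epi_state :: "(nat \<Rightarrow> real) \<Rightarrow> (nat \<Rightarrow> real) \<Rightarrow> (nat \<Rightarrow> real)
    \<Rightarrow> (nat \<Rightarrow> real \<times> real \<times> real \<times> real \<Rightarrow> real)
    \<Rightarrow> real \<times> real \<times> real \<times> real \<Rightarrow> nat \<Rightarrow> real \<times> real \<times> real \<times> real" where
  "epi_state de dI v u x0 0 = x0"
| "epi_state de dI v u x0 (Suc k) =
     (case epi_state de dI v u x0 k of (S, I, R, D) \<Rightarrow>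
        (let uk = u k (S, I, R, D) in
          (S - de k * I, (1 + de k) * I - v k * uk - dI k * I, R + v k * uk, D + dI k * I)))"

end

theory Submission
  imports Defs
begin

lemma (in prob_space) prodZ:
  fixes Y :: "nat \<times> nat \<Rightarrow> 'a \<Rightarrow> real"
  assumes indep: "indep_vars (\<lambda>_. borel) Y ({0,1,2} \<times> UNIV)"
    and bnd: "\<And>t \<omega>. \<omega> \<in> space M \<Longrightarrow> \<bar>Y t \<omega>\<bar> \<le> C"
    and mean: "\<And>c i. c < 3 \<Longrightarrow> expectation (Y (c,i)) = m c"
    and F: "finite F" and g: "\<And>i. i \<in> F \<Longrightarrow> g i \<le> (3::nat)"
  shows "integrable M (\<lambda>\<omega>. \<Prod>i\<in>F. (if g i = 0 then 1 else Y (g i - 1, i) \<omega>))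
     \<and> expectation (\<lambda>\<omega>. \<Prod>i\<in>F. (if g i = 0 then 1 else Y (g i - 1, i) \<omega>))
       = (\<Prod>i\<in>F. (if g i = 0 then 1 else m (g i - 1)))"
proof -
  define Y' where "Y' = (\<lambda>t \<omega>. if g (snd t) = Suc (fst t) then Y t \<omega> else 1)"
  have rv: "\<And>t. t \<in> {0,1,2} \<times> UNIV \<Longrightarrow> random_variable borel (Y t)"
    using indep unfolding indep_vars_def by auto
  have ind': "indep_vars (\<lambda>_. borel) Y' ({0,1,2} \<times> UNIV)"
    unfolding Y'_def
    by (rule indep_vars_compose2[OF indep, where Y="\<lambda>t x. if g (snd t) = Suc (fst t) then x else 1"]) auto
  have ind'': "indep_vars (\<lambda>_. borel) Y' ({0,1,2} \<times> F)"
    by (rule indep_vars_subset[OF ind']) auto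
  have intY': "integrable M (Y' t)" if "t \<in> {0,1,2} \<times> F" for t
  proof (rule integrable_const_bound[where B="max C 1"])
    show "AE x in M. norm (Y' t x) \<le> max C 1"
    proof (rule AE_I2)
      fix x assume "x \<in> space M"
      then show "norm (Y' t x) \<le> max C 1" using bnd[of x t] by (auto simp: Y'_def)
    qed
    show "Y' t \<in> borel_measurable M"
      using rv[of t] that unfolding Y'_def by auto
  qed
  have EY': "expectation (Y' t) = (if g (snd t) = Suc (fst t) then m (fst t) else 1)"
    if "t \<in> {0,1,2} \<times> F" for t
    using that mean[of "fst t" "snd t"] by (auto simp: Y'_def prob_space)
  have eq: "(\<Prod>i\<in>F. (if g i = 0 then 1 else Y (g i - 1, i) \<omega>)) = (\<Prod>t\<in>{0,1,2} \<times> F. Y' t \<omega>)" for \<omega>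
  proof -
    have "(\<Prod>i\<in>F. (if g i = 0 then 1 else Y (g i - 1, i) \<omega>)) = (\<Prod>i\<in>F. \<Prod>c\<in>{0,1,2::nat}. Y' (c,i) \<omega>)"
    proof (rule prod.cong)
      fix i assume "i \<in> F"
      then have "g i = 0 \<or> g i = 1 \<or> g i = 2 \<or> g i = 3" using g[of i] by auto
      then show "(if g i = 0 then 1 else Y (g i - 1, i) \<omega>) = (\<Prod>c\<in>{0,1,2::nat}. Y' (c,i) \<omega>)"
        by (auto simp: Y'_def)
    qed simp
    also have "\<dots> = (\<Prod>c\<in>{0,1,2::nat}. \<Prod>i\<in>F. Y' (c,i) \<omega>)" by (rule prod.swap)
    also have "\<dots> = (\<Prod>t\<in>{0,1,2} \<times> F. Y' t \<omega>)"
      by (subst prod.cartesian_product) (simp add: case_prod_beta')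
    finally show ?thesis .
  qed
  have eqm: "(\<Prod>i\<in>F. (if g i = 0 then 1 else m (g i - 1))) = (\<Prod>t\<in>{0,1,2} \<times> F. expectation (Y' t))"
  proof -
    have "(\<Prod>i\<in>F. (if g i = 0 then 1 else m (g i - 1))) = (\<Prod>i\<in>F. \<Prod>c\<in>{0,1,2::nat}. expectation (Y' (c,i)))"
    proof (rule prod.cong)
      fix i assume "i \<in> F"
      then have "g i = 0 \<or> g i = 1 \<or> g i = 2 \<or> g i = 3" using g[of i] by auto
      then show "(if g i = 0 then 1 else m (g i - 1)) = (\<Prod>c\<in>{0,1,2::nat}. expectation (Y' (c,i)))"
        using EY' \<open>i \<in> F\<close> by auto
    qed simp
    also have "\<dots> = (\<Prod>c\<in>{0,1,2::nat}. \<Prod>i\<in>F. expectation (Y' (c,i)))" by (rule prod.swap)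
    also have "\<dots> = (\<Prod>t\<in>{0,1,2} \<times> F. expectation (Y' t))"
      by (subst prod.cartesian_product) (simp add: case_prod_beta')
    finally show ?thesis .
  qed
  have fin: "finite ({0,1,2::nat} \<times> F)" using F by auto
  show ?thesis
    unfolding eq eqm
    using indep_vars_lebesgue_integral[OF fin ind'' intY'] indep_vars_integrable[OF fin ind'' intY']
    by simp
qed

lemma (in prob_space) prodG:
  fixes Y :: "nat \<times> nat \<Rightarrow> 'a \<Rightarrow> real"
  assumes indep: "indep_vars (\<lambda>_. borel) Y ({0,1,2} \<times> UNIV)"
    and bnd: "\<And>t \<omega>. \<omega> \<in> space M \<Longrightarrow> \<bar>Y t \<omega>\<bar> \<le> C"
    and mean: "\<And>c i. c < 3 \<Longrightarrow> expectation (Y (c,i)) = m c"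
    and F: "finite F" and B: "\<And>i. i \<in> F \<Longrightarrow> B i \<subseteq> {0..(3::nat)}"
  shows "integrable M (\<lambda>\<omega>. \<Prod>i\<in>F. \<Sum>c\<in>B i. w c * (if c = 0 then 1 else Y (c - 1, i) \<omega>))
     \<and> expectation (\<lambda>\<omega>. \<Prod>i\<in>F. \<Sum>c\<in>B i. w c * (if c = 0 then 1 else Y (c - 1, i) \<omega>))
       = (\<Prod>i\<in>F. \<Sum>c\<in>B i. w c * (if c = 0 then 1 else m (c - 1)))"
proof -
  have finB: "\<And>i. i \<in> F \<Longrightarrow> finite (B i)" using B finite_subset by blast
  have exp: "(\<Prod>i\<in>F. \<Sum>c\<in>B i. w c * z c i) =
     (\<Sum>g\<in>PiE F B. (\<Prod>i\<in>F. w (g i)) * (\<Prod>i\<in>F. z (g i) i))" for z :: "nat \<Rightarrow> nat \<Rightarrow> real"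
    by (subst prod_sum_PiE[OF F finB]) (auto simp: prod.distrib)
  have P: "integrable M (\<lambda>\<omega>. \<Prod>i\<in>F. (if g i = 0 then 1 else Y (g i - 1, i) \<omega>))
     \<and> expectation (\<lambda>\<omega>. \<Prod>i\<in>F. (if g i = 0 then 1 else Y (g i - 1, i) \<omega>))
       = (\<Prod>i\<in>F. (if g i = 0 then 1 else m (g i - 1)))" if "g \<in> PiE F B" for g
  proof (rule prodZ[OF indep bnd mean F])
    fix i assume i: "i \<in> F"
    then have "g i \<in> B i" using that by (auto simp: PiE_def)
    then show "g i \<le> 3" using B[OF i] by auto
  qed
  have fin: "finite (PiE F B)" using F finB by (rule finite_PiE)
  have "(\<lambda>\<omega>. \<Prod>i\<in>F. \<Sum>c\<in>B i. w c * (if c = 0 then 1 else Y (c - 1, i) \<omega>)) =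
     (\<lambda>\<omega>. \<Sum>g\<in>PiE F B. (\<Prod>i\<in>F. w (g i)) * (\<Prod>i\<in>F. (if g i = 0 then 1 else Y (g i - 1, i) \<omega>)))"
    by (rule ext, rule exp)
  moreover have "(\<Prod>i\<in>F. \<Sum>c\<in>B i. w c * (if c = 0 then 1 else m (c - 1))) =
     (\<Sum>g\<in>PiE F B. (\<Prod>i\<in>F. w (g i)) * (\<Prod>i\<in>F. (if g i = 0 then 1 else m (g i - 1))))"
    by (rule exp)
  moreover have "integrable M (\<lambda>\<omega>. \<Sum>g\<in>PiE F B. (\<Prod>i\<in>F. w (g i)) * (\<Prod>i\<in>F. (if g i = 0 then 1 else Y (g i - 1, i) \<omega>)))"
  proof (rule Bochner_Integration.integrable_sum)
    fix g assume "g \<in> PiE F B"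
    then show "integrable M (\<lambda>\<omega>. (\<Prod>i\<in>F. w (g i)) * (\<Prod>i\<in>F. (if g i = 0 then 1 else Y (g i - 1, i) \<omega>)))"
      using P by (intro integrable_mult_right) blast
  qed
  moreover have "expectation (\<lambda>\<omega>. \<Sum>g\<in>PiE F B. (\<Prod>i\<in>F. w (g i)) * (\<Prod>i\<in>F. (if g i = 0 then 1 else Y (g i - 1, i) \<omega>)))
     = (\<Sum>g\<in>PiE F B. (\<Prod>i\<in>F. w (g i)) * (\<Prod>i\<in>F. (if g i = 0 then 1 else m (g i - 1))))"
  proof (subst Bochner_Integration.integral_sum)
    fix g assume "g \<in> PiE F B"
    then show "integrable M (\<lambda>\<omega>. (\<Prod>i\<in>F. w (g i)) * (\<Prod>i\<in>F. (if g i = 0 then 1 else Y (g i - 1, i) \<omega>)))"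
      using P by (intro integrable_mult_right) blast
  next
    show "(\<Sum>g\<in>PiE F B. expectation (\<lambda>\<omega>. (\<Prod>i\<in>F. w (g i)) * (\<Prod>i\<in>F. (if g i = 0 then 1 else Y (g i - 1, i) \<omega>))))
     = (\<Sum>g\<in>PiE F B. (\<Prod>i\<in>F. w (g i)) * (\<Prod>i\<in>F. (if g i = 0 then 1 else m (g i - 1))))"
      using P by (intro sum.cong) auto
  qed
  ultimately show ?thesis by simp
qed

lemma epi_path:
  "fst (epi_state de dI v (\<lambda>j st. K * fst (snd st)) (S0, I0, 0, 0) k)
     = S0 - (\<Sum>j<k. I0 * (de j * (\<Prod>i<j. 1 + de i - dI i - K * v i)))
   \<and> fst (snd (epi_state de dI v (\<lambda>j st. K * fst (snd st)) (S0, I0, 0, 0) k))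
     = I0 * (\<Prod>i<k. 1 + de i - dI i - K * v i)"
proof (induction k)
  case 0
  then show ?case by simp
next
  case (Suc k)
  obtain S I R D where e: "epi_state de dI v (\<lambda>j st. K * fst (snd st)) (S0, I0, 0, 0) k = (S, I, R, D)"
    by (cases "epi_state de dI v (\<lambda>j st. K * fst (snd st)) (S0, I0, 0, 0) k") auto
  show ?case using Suc e by (simp add: algebra_simps)
qed

theorem lemma10:
  fixes M :: "'a measure"
    and \<delta> dI v :: "nat \<Rightarrow> 'a \<Rightarrow> real"
    and \<delta>max dmax vmin vmax S0 I0 K :: real
  assumes "prob_space M"
    and indep: "prob_space.indep_vars M (\<lambda>_. borel)
          (\<lambda>(j::nat, k). if j = 0 then \<delta> k else if j = 1 then dI k else v k)
          ({0, 1, 2} \<times> UNIV)"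
    and iid_\<delta>: "\<And>k. distr M borel (\<delta> k) = distr M borel (\<delta> 0)"
    and iid_dI: "\<And>k. distr M borel (dI k) = distr M borel (dI 0)"
    and iid_v: "\<And>k. distr M borel (v k) = distr M borel (v 0)"
    and "\<delta>max > 0" and "dmax < 1"
    and "0 < vmin" and "vmin \<le> vmax" and "vmax \<le> 1"
    and \<delta>_bd: "\<And>k \<omega>. \<omega> \<in> space M \<Longrightarrow> 0 \<le> \<delta> k \<omega> \<and> \<delta> k \<omega> \<le> \<delta>max"
    and dI_bd: "\<And>k \<omega>. \<omega> \<in> space M \<Longrightarrow> 0 \<le> dI k \<omega> \<and> dI k \<omega> \<le> dmax"
    and v_bd: "\<And>k \<omega>. \<omega> \<in> space M \<Longrightarrow> vmin \<le> v k \<omega> \<and> v k \<omega> \<le> vmax"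
    and "I0 > 0" and "I0 * \<delta>max < S0"
    and "0 \<le> K" and "K \<le> (1 - dmax) / vmax"
  shows "let S = (\<lambda>k \<omega>. fst (epi_state (\<lambda>j. \<delta> j \<omega>) (\<lambda>j. dI j \<omega>) (\<lambda>j. v j \<omega>)
                              (\<lambda>j st. K * fst (snd st)) (S0, I0, 0, 0) k));
             \<delta>bar = prob_space.expectation M (\<delta> 0);
             dbar = prob_space.expectation M (dI 0);
             vbar = prob_space.expectation M (v 0)
         in \<forall>k::nat. 1 \<le> k \<and> int k \<le> \<lfloor>S0 / (\<delta>max * I0)\<rfloor> \<longrightarrow>
              (K * vbar > \<delta>bar - dbar \<longrightarrow>
                 prob_space.expectation M (S k) =
                   S0 - \<delta>bar * I0 * (1 - (1 + \<delta>bar - dbar - K * vbar) ^ k) / (K * vbar - \<delta>bar + dbar))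
            \<and> (K * vbar = \<delta>bar - dbar \<longrightarrow>
                 prob_space.expectation M (S k) = S0 - I0 * \<delta>bar * real k)"
proof -
  interpret prob_space M by fact
  define Y where "Y = (\<lambda>(j::nat, k). if j = 0 then \<delta> k else if j = 1 then dI k else v k)"
  define \<delta>bar where "\<delta>bar = expectation (\<delta> 0)"
  define dbar where "dbar = expectation (dI 0)"
  define vbar where "vbar = expectation (v 0)"
  define m where "m c = (if c = 0 then \<delta>bar else if c = 1 then dbar else vbar)" for c :: nat
  define abar where "abar = 1 + \<delta>bar - dbar - K * vbar"
  define C where "C = \<delta>max + \<bar>dmax\<bar> + vmax"
  have indY: "indep_vars (\<lambda>_. borel) Y ({0,1,2} \<times> UNIV)" using indep unfolding Y_def .
  have rv: "random_variable borel (Y t)" if "t \<in> {0,1,2} \<times> UNIV" for t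
    using indY that unfolding indep_vars_def by auto
  have rv\<delta>: "random_variable borel (\<delta> k)" for k using rv[of "(0,k)"] by (simp add: Y_def)
  have rvd: "random_variable borel (dI k)" for k using rv[of "(1,k)"] by (simp add: Y_def)
  have rvv: "random_variable borel (v k)" for k using rv[of "(2,k)"] by (simp add: Y_def)
  have samemean: "expectation X = expectation X0"
    if "random_variable borel X" "random_variable borel X0" "distr M borel X = distr M borel X0" for X X0 :: "'a \<Rightarrow> real"
  proof -
    have "expectation X = integral\<^sup>L (distr M borel X) (\<lambda>x. x)"
      using integral_distr[OF that(1), of "\<lambda>x. x"] by simp
    also have "\<dots> = integral\<^sup>L (distr M borel X0) (\<lambda>x. x)" using that by simp
    also have "\<dots> = expectation X0"
      using integral_distr[OF that(2), of "\<lambda>x. x"] by simp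
    finally show ?thesis .
  qed
  have bnd: "\<bar>Y t \<omega>\<bar> \<le> C" if "\<omega> \<in> space M" for t \<omega>
    using \<delta>_bd[OF that, of "snd t"] dI_bd[OF that, of "snd t"] v_bd[OF that, of "snd t"] \<open>0 < vmin\<close>
    by (cases t) (auto simp: Y_def C_def split: if_splits)
  have mean: "expectation (Y (c,i)) = m c" if "c < 3" for c i
  proof -
    have "c = 0 \<or> c = 1 \<or> c = 2" using that by auto
    then show ?thesis
      using samemean[OF rv\<delta> rv\<delta> iid_\<delta>[of i]] samemean[OF rvd rvd iid_dI[of i]] samemean[OF rvv rvv iid_v[of i]]
      by (auto simp: Y_def m_def \<delta>bar_def dbar_def vbar_def)
  qed
  define w where "w c = (if c = 0 then 1 else if c = 1 then 1 else if c = 2 then -1 else - K)" for c :: nat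
  have key: "integrable M (\<lambda>\<omega>. \<delta> j \<omega> * (\<Prod>i<j. 1 + \<delta> i \<omega> - dI i \<omega> - K * v i \<omega>))
    \<and> expectation (\<lambda>\<omega>. \<delta> j \<omega> * (\<Prod>i<j. 1 + \<delta> i \<omega> - dI i \<omega> - K * v i \<omega>)) = \<delta>bar * abar ^ j" for j
  proof -
    define B where "B i = (if i = j then {1} else {0,1,2,3::nat})" for i
    have G: "integrable M (\<lambda>\<omega>. \<Prod>i\<in>insert j {..<j}. \<Sum>c\<in>B i. w c * (if c = 0 then 1 else Y (c - 1, i) \<omega>))
     \<and> expectation (\<lambda>\<omega>. \<Prod>i\<in>insert j {..<j}. \<Sum>c\<in>B i. w c * (if c = 0 then 1 else Y (c - 1, i) \<omega>))
       = (\<Prod>i\<in>insert j {..<j}. \<Sum>c\<in>B i. w c * (if c = 0 then 1 else m (c - 1)))"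
      by (rule prodG[OF indY bnd mean]) (auto simp: B_def)
    have e1: "(\<lambda>\<omega>. \<Prod>i\<in>insert j {..<j}. \<Sum>c\<in>B i. w c * (if c = 0 then 1 else Y (c - 1, i) \<omega>))
      = (\<lambda>\<omega>. \<delta> j \<omega> * (\<Prod>i<j. 1 + \<delta> i \<omega> - dI i \<omega> - K * v i \<omega>))"
    proof
      fix \<omega>
      have "(\<Prod>i\<in>insert j {..<j}. \<Sum>c\<in>B i. w c * (if c = 0 then 1 else Y (c - 1, i) \<omega>))
        = (\<Sum>c\<in>B j. w c * (if c = 0 then 1 else Y (c - 1, j) \<omega>)) *
          (\<Prod>i<j. \<Sum>c\<in>B i. w c * (if c = 0 then 1 else Y (c - 1, i) \<omega>))"
        by (simp add: prod.insert)
      also have "\<dots> = \<delta> j \<omega> * (\<Prod>i<j. 1 + \<delta> i \<omega> - dI i \<omega> - K * v i \<omega>)"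
        by (intro arg_cong2[where f="(*)"] prod.cong) (auto simp: B_def w_def Y_def)
      finally show "(\<Prod>i\<in>insert j {..<j}. \<Sum>c\<in>B i. w c * (if c = 0 then 1 else Y (c - 1, i) \<omega>))
        = \<delta> j \<omega> * (\<Prod>i<j. 1 + \<delta> i \<omega> - dI i \<omega> - K * v i \<omega>)" .
    qed
    have e2: "(\<Prod>i\<in>insert j {..<j}. \<Sum>c\<in>B i. w c * (if c = 0 then 1 else m (c - 1))) = \<delta>bar * abar ^ j"
    proof -
      have "(\<Prod>i\<in>insert j {..<j}. \<Sum>c\<in>B i. w c * (if c = 0 then 1 else m (c - 1)))
        = (\<Sum>c\<in>B j. w c * (if c = 0 then 1 else m (c - 1))) *
          (\<Prod>i<j. \<Sum>c\<in>B i. w c * (if c = 0 then 1 else m (c - 1)))"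
        by (simp add: prod.insert)
      also have "\<dots> = \<delta>bar * (\<Prod>i<j. abar)"
        by (intro arg_cong2[where f="(*)"] prod.cong) (auto simp: B_def w_def m_def abar_def)
      finally show ?thesis by simp
    qed
    show ?thesis using G unfolding e1 e2 .
  qed
  have path: "fst (epi_state (\<lambda>j. \<delta> j \<omega>) (\<lambda>j. dI j \<omega>) (\<lambda>j. v j \<omega>) (\<lambda>j st. K * fst (snd st)) (S0, I0, 0, 0) k)
     = S0 - (\<Sum>j<k. I0 * (\<delta> j \<omega> * (\<Prod>i<j. 1 + \<delta> i \<omega> - dI i \<omega> - K * v i \<omega>)))" for k \<omega>
    using epi_path[of "\<lambda>j. \<delta> j \<omega>" "\<lambda>j. dI j \<omega>" "\<lambda>j. v j \<omega>" K S0 I0 k] by simp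
  have ES: "expectation (\<lambda>\<omega>. fst (epi_state (\<lambda>j. \<delta> j \<omega>) (\<lambda>j. dI j \<omega>) (\<lambda>j. v j \<omega>) (\<lambda>j st. K * fst (snd st)) (S0, I0, 0, 0) k))
     = S0 - I0 * \<delta>bar * (\<Sum>j<k. abar ^ j)" for k
  proof -
    have int: "integrable M (\<lambda>\<omega>. \<Sum>j<k. I0 * (\<delta> j \<omega> * (\<Prod>i<j. 1 + \<delta> i \<omega> - dI i \<omega> - K * v i \<omega>)))"
      using key by (intro Bochner_Integration.integrable_sum integrable_mult_right) blast
    have "expectation (\<lambda>\<omega>. \<Sum>j<k. I0 * (\<delta> j \<omega> * (\<Prod>i<j. 1 + \<delta> i \<omega> - dI i \<omega> - K * v i \<omega>)))
        = (\<Sum>j<k. I0 * (\<delta>bar * abar ^ j))"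
      using key by (subst Bochner_Integration.integral_sum) (auto intro: integrable_mult_right)
    then show ?thesis
      unfolding path using int
      by (subst Bochner_Integration.integral_diff) (auto simp: prob_space sum_distrib_left mult.assoc)
  qed
  show ?thesis
    unfolding Let_def ES \<delta>bar_def[symmetric] dbar_def[symmetric] vbar_def[symmetric]
  proof (intro allI impI conjI)
    fix k :: nat
    assume "K * vbar > \<delta>bar - dbar"
    then have ne: "abar \<noteq> 1" and ne2: "K * vbar - \<delta>bar + dbar \<noteq> 0" by (auto simp: abar_def)
    have "1 - abar = K * vbar - \<delta>bar + dbar" by (simp add: abar_def)
    then show "S0 - I0 * \<delta>bar * (\<Sum>j<k. abar ^ j) =
      S0 - \<delta>bar * I0 * (1 - (1 + \<delta>bar - dbar - K * vbar) ^ k) / (K * vbar - \<delta>bar + dbar)"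
      using ne by (simp add: sum_gp_strict abar_def[symmetric])
  next
    fix k :: nat
    assume "K * vbar = \<delta>bar - dbar"
    then have "abar = 1" by (simp add: abar_def)
    then show "S0 - I0 * \<delta>bar * (\<Sum>j<k. abar ^ j) = S0 - I0 * \<delta>bar * real k" by simp
  qed
qed

end
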